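(* \textsf{SpecRel} $\vdash$ the following sentence: for all bodies $o,o'$ and all $\bar x,\bar x',\bar y,\bar y'\in Q^4$, if $\mathsf{IOb}(o)$, $\mathsf{IOb}(o')$, $\forall b\,(\mathsf{W}(o,b,\bar x)\leftrightarrow\mathsf{W}(o',b,\bar x'))$ and $\forall b\,(\mathsf{W}(o,b,\bar y)\leftrightarrow\mathsf{W}(o',b,\bar y'))$, then $\mu(\bar x,\bar y)=\mu(\bar x',\bar y')$, where $\mu(\bar x,\bar y):=(x_1-y_1)^2+(x_2-y_2)^2+(x_3-y_3)^2-(x_4-y_4)^2$. Here $\vdash$ denotes derivability in a standard proof system of first-order logic.
   Context: Two-sorted first-order language $\{B,\mathsf{IB},\mathsf{Ph},Q,+,\cdot,<,\mathsf{W}\}$: sorts $B$ (bodies) and $Q$ (quantities); $\mathsf{IB},\mathsf{Ph}$ unary relations on $B$ (inertial bodies, photons); $+,\cdot$ binary functions and $<$ binary relation on $Q$; $\mathsf{W}$ a 6-ary relation of sort $B\,B\,Q\,Q\,Q\,Q$ ($\mathsf{W}(o,b,x,y,z,t)$: observer $o$ coordinatizes body $b$ at $\langle x,y,z,t\rangle$). Bars denote 4-tuples of $Q$-variables. Defined: $\mathsf{Ob}(o):\iff\exists b\,\bar x\ \mathsf{W}(o,b,\bar x)$; $\mathsf{IOb}(o):\iff \mathsf{IB}(o)\wedge\mathsf{Ob}(o)$. \textsf{SpecRel} consists of the axioms: AxField: $\langle Q;+,\cdot,<\rangle$ is a linearly ordered field (with zero $0$). AxSelf: $\forall o\,x y z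 t\ \mathsf{IOb}(o)\to(\mathsf{W}(o,o,x,y,z,t)\leftrightarrow x=y=z=0)$. AxPh: $\forall o\,\bar x\,\bar x'\ \mathsf{IOb}(o)\to\big(\exists p(\mathsf{Ph}(p)\wedge\mathsf{W}(o,p,\bar x)\wedge\mathsf{W}(o,p,\bar x'))\leftrightarrow (x_1-x'_1)^2+(x_2-x'_2)^2+(x_3-x'_3)^2=(x_4-x'_4)^2\big)$. AxEv: $\forall o\,o'\,\bar x\ \mathsf{IOb}(o)\wedge\mathsf{IOb}(o')\to\exists\bar x'\,\forall b\ (\mathsf{W}(o,b,\bar x)\leftrightarrow\mathsf{W}(o',b,\bar x'))$. AxSymd: for all $o,o',\bar x,\bar x',\bar y,\bar y'$: if $\mathsf{IOb}(o)$, $\mathsf{IOb}(o')$, $x_4=y_4$, $x'_4=y'_4$, $\forall b(\mathsf{W}(o,b,\bar x)\leftrightarrow\mathsf{W}(o',b,\bar x'))$ and $\forall b(\mathsf{W}(o,b,\bar y)\leftrightarrow\mathsf{W}(o',b,\bar y'))$, then $(x_1-y_1)^2+(x_2-y_2)^2+(x_3-y_3)^2=(x'_1-y'_1)^2+(x'_2-y'_2)^2+(x'_3-y'_3)^2$. *)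

theory Defs
  imports Main
begin

text \<open>A model of the language: bodies of type 'b, quantities of type 'q (a linearly
ordered field, which is AxField, given by the type class), unary relations IB, Ph
on bodies, and the 6-ary world-view relation W.\<close>

definition Ob :: "('b \<Rightarrow> 'b \<Rightarrow> 'q \<Rightarrow> 'q \<Rightarrow> 'q \<Rightarrow> 'q \<Rightarrow> bool) \<Rightarrow> 'b \<Rightarrow> bool" where
  "Ob W ob \<longleftrightarrow> (\<exists>b x y z t. W ob b x y z t)"

definition IOb :: "('b \<Rightarrow> bool) \<Rightarrow> ('b \<Rightarrow> 'b \<Rightarrow> 'q \<Rightarrow> 'q \<Rightarrow> 'q \<Rightarrow> 'q \<Rightarrow> bool) \<Rightarrow> 'b \<Rightarrow> bool" where
  "IOb IB W ob \<longleftrightarrow> IB ob \<and> Ob W ob"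

definition AxSelf :: "('b \<Rightarrow> bool) \<Rightarrow> ('b \<Rightarrow> 'b \<Rightarrow> 'q::linordered_field \<Rightarrow> 'q \<Rightarrow> 'q \<Rightarrow> 'q \<Rightarrow> bool) \<Rightarrow> bool" where
  "AxSelf IB W \<longleftrightarrow> (\<forall>ob x y z t. IOb IB W ob \<longrightarrow> (W ob ob x y z t \<longleftrightarrow> x = 0 \<and> y = 0 \<and> z = 0))"

definition AxPh :: "('b \<Rightarrow> bool) \<Rightarrow> ('b \<Rightarrow> bool) \<Rightarrow> ('b \<Rightarrow> 'b \<Rightarrow> 'q::linordered_field \<Rightarrow> 'q \<Rightarrow> 'q \<Rightarrow> 'q \<Rightarrow> bool) \<Rightarrow> bool" where
  "AxPh IB Ph W \<longleftrightarrow> (\<forall>ob x1 x2 x3 x4 x1' x2' x3' x4'. IOb IB W ob \<longrightarrow>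
     ((\<exists>p. Ph p \<and> W ob p x1 x2 x3 x4 \<and> W ob p x1' x2' x3' x4') \<longleftrightarrow>
      (x1 - x1')^2 + (x2 - x2')^2 + (x3 - x3')^2 = (x4 - x4')^2))"

definition AxEv :: "('b \<Rightarrow> bool) \<Rightarrow> ('b \<Rightarrow> 'b \<Rightarrow> 'q \<Rightarrow> 'q \<Rightarrow> 'q \<Rightarrow> 'q \<Rightarrow> bool) \<Rightarrow> bool" where
  "AxEv IB W \<longleftrightarrow> (\<forall>ob ob' x1 x2 x3 x4. IOb IB W ob \<and> IOb IB W ob' \<longrightarrow>
     (\<exists>x1' x2' x3' x4'. \<forall>b. W ob b x1 x2 x3 x4 \<longleftrightarrow> W ob' b x1' x2' x3' x4'))"

definition AxSymd :: "('b \<Rightarrow> bool) \<Rightarrow> ('b \<Rightarrow> 'b \<Rightarrow> 'q::linordered_field \<Rightarrow> 'q \<Rightarrow> 'q \<Rightarrow> 'q \<Rightarrow> bool) \<Rightarrow> bool" where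
  "AxSymd IB W \<longleftrightarrow> (\<forall>ob ob' x1 x2 x3 x4 x1' x2' x3' x4' y1 y2 y3 y4 y1' y2' y3' y4'.
     IOb IB W ob \<and> IOb IB W ob' \<and> x4 = y4 \<and> x4' = y4' \<and>
     (\<forall>b. W ob b x1 x2 x3 x4 \<longleftrightarrow> W ob' b x1' x2' x3' x4') \<and>
     (\<forall>b. W ob b y1 y2 y3 y4 \<longleftrightarrow> W ob' b y1' y2' y3' y4') \<longrightarrow>
     (x1 - y1)^2 + (x2 - y2)^2 + (x3 - y3)^2 = (x1' - y1')^2 + (x2' - y2')^2 + (x3' - y3')^2)"

definition SpecRel :: "('b \<Rightarrow> bool) \<Rightarrow> ('b \<Rightarrow> bool) \<Rightarrow> ('b \<Rightarrow> 'b \<Rightarrow> 'q::linordered_field \<Rightarrow> 'q \<Rightarrow> 'q \<Rightarrow> 'q \<Rightarrow> bool) \<Rightarrow> bool" where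
  "SpecRel IB Ph W \<longleftrightarrow> AxSelf IB W \<and> AxPh IB Ph W \<and> AxEv IB W \<and> AxSymd IB W"

definition mu :: "'q::linordered_field \<Rightarrow> 'q \<Rightarrow> 'q \<Rightarrow> 'q \<Rightarrow> 'q \<Rightarrow> 'q \<Rightarrow> 'q \<Rightarrow> 'q \<Rightarrow> 'q" where
  "mu x1 x2 x3 x4 y1 y2 y3 y4 = (x1 - y1)^2 + (x2 - y2)^2 + (x3 - y3)^2 - (x4 - y4)^2"

end

theory Submission
  imports Defs
begin

datatype 'a v4 = V (c1: 'a) (c2: 'a) (c3: 'a) (c4: 'a)

instantiation v4 :: (ab_group_add) ab_group_add
begin
definition "zero_v4 = V 0 0 0 0"
definition "plus_v4 x y = V (c1 x + c1 y) (c2 x + c2 y) (c3 x + c3 y) (c4 x + c4 y)"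
definition "minus_v4 x y = V (c1 x - c1 y) (c2 x - c2 y) (c3 x - c3 y) (c4 x - c4 y)"
definition "uminus_v4 x = V (- c1 x) (- c2 x) (- c3 x) (- c4 x)"
instance
  by standard (auto simp: zero_v4_def plus_v4_def minus_v4_def uminus_v4_def v4.expand algebra_simps)
end

lemma v4_comps[simp]:
  "c1 (x + y) = c1 x + c1 y" "c2 (x + y) = c2 x + c2 y" "c3 (x + y) = c3 x + c3 y" "c4 (x + y) = c4 x + c4 y"
  "c1 (x - y) = c1 x - c1 y" "c2 (x - y) = c2 x - c2 y" "c3 (x - y) = c3 x - c3 y" "c4 (x - y) = c4 x - c4 y"
  "c1 (- x) = - c1 x" "c2 (- x) = - c2 x" "c3 (- x) = - c3 x" "c4 (- x) = - c4 x"
  "c1 0 = 0" "c2 0 = 0" "c3 0 = 0" "c4 0 = 0"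
  by (simp_all add: zero_v4_def plus_v4_def minus_v4_def uminus_v4_def)

lemma v4_eq_iff: "x = y \<longleftrightarrow> c1 x = c1 y \<and> c2 x = c2 y \<and> c3 x = c3 y \<and> c4 x = c4 y"
  by (auto simp: v4.expand)

definition smul :: "'a::field \<Rightarrow> 'a v4 \<Rightarrow> 'a v4" where
  "smul t x = V (t * c1 x) (t * c2 x) (t * c3 x) (t * c4 x)"

lemma smul_comps[simp]: "c1 (smul t x) = t * c1 x" "c2 (smul t x) = t * c2 x"
  "c3 (smul t x) = t * c3 x" "c4 (smul t x) = t * c4 x"
  by (simp_all add: smul_def)

definition ip :: "'a::field v4 \<Rightarrow> 'a v4 \<Rightarrow> 'a" where
  "ip x y = c1 x * c1 y + c2 x * c2 y + c3 x * c3 y - c4 x * c4 y"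

definition Qf where "Qf x = ip x x"

definition Nl where "Nl x y \<longleftrightarrow> Qf (x - y) = 0"

lemma ip_sym: "ip x y = ip y x" by (simp add: ip_def algebra_simps)
lemma ip_add_left: "ip (x + y) z = ip x z + ip y z" by (simp add: ip_def algebra_simps)
lemma ip_add_right: "ip z (x + y) = ip z x + ip z y" by (simp add: ip_def algebra_simps)
lemma ip_diff_left: "ip (x - y) z = ip x z - ip y z" by (simp add: ip_def algebra_simps)
lemma ip_diff_right: "ip z (x - y) = ip z x - ip z y" by (simp add: ip_def algebra_simps)
lemma ip_smul_left: "ip (smul t x) z = t * ip x z" by (simp add: ip_def algebra_simps)
lemma ip_smul_right: "ip z (smul t x) = t * ip z x" by (simp add: ip_def algebra_simps)
lemma ip_zero[simp]: "ip 0 x = 0" "ip x 0 = 0" by (simp_all add: ip_def)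
lemma ip_neg_left: "ip (- x) z = - ip x z" by (simp add: ip_def algebra_simps)

lemmas ip_lin = ip_add_left ip_add_right ip_diff_left ip_diff_right ip_smul_left ip_smul_right ip_neg_left

lemma Qf_diff: "Qf (x - y) = Qf x - 2 * ip x y + Qf y"
  unfolding Qf_def ip_def by (simp add: v4_comps, algebra)
lemma Qf_add: "Qf (x + y) = Qf x + 2 * ip x y + Qf y"
  unfolding Qf_def ip_def by (simp add: v4_comps, algebra)
lemma Qf_smul: "Qf (smul t x) = t^2 * Qf x"
  unfolding Qf_def ip_def by (simp add: power2_eq_square, algebra)

lemma smul_zero[simp]: "smul t 0 = 0" "smul 0 x = 0" by (simp_all add: v4_eq_iff)
lemma smul_one[simp]: "smul 1 x = x" by (simp add: v4_eq_iff)

lemma sq3_zero: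
  fixes a b c :: "'a::linordered_field"
  shows "a^2 + b^2 + c^2 = 0 \<Longrightarrow> a = 0 \<and> b = 0 \<and> c = 0"
  by (metis add_nonneg_nonneg power_zero_numeral sum_power2_eq_zero_iff zero_le_power2 add_nonneg_eq_0_iff)

lemma G1:
  fixes u v :: "'a::linordered_field v4"
  assumes "Qf u = 0" "Qf v = 0" "ip u v = 0" "u \<noteq> 0"
  shows "\<exists>t. v = smul t u"
proof -
  have c4u: "c4 u \<noteq> 0"
  proof
    assume "c4 u = 0"
    with assms(1) have "(c1 u)^2 + (c2 u)^2 + (c3 u)^2 = 0"
      by (simp add: Qf_def ip_def power2_eq_square)
    then have "c1 u = 0 \<and> c2 u = 0 \<and> c3 u = 0" by (rule sq3_zero)
    with \<open>c4 u = 0\<close> assms(4) show False by (simp add: v4_eq_iff)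
  qed
  define t where "t = c4 v / c4 u"
  have "(c1 v - t * c1 u)^2 + (c2 v - t * c2 u)^2 + (c3 v - t * c3 u)^2
      = ((c1 v)^2 + (c2 v)^2 + (c3 v)^2) - 2 * t * (c1 u * c1 v + c2 u * c2 v + c3 u * c3 v)
        + t^2 * ((c1 u)^2 + (c2 u)^2 + (c3 u)^2)"
    by (simp add: algebra_simps power2_eq_square)
  also have "\<dots> = (c4 v)^2 - 2 * t * (c4 u * c4 v) + t^2 * (c4 u)^2"
    using assms(1-3) by (simp add: Qf_def ip_def power2_eq_square algebra_simps)
  also have "\<dots> = (c4 v - t * c4 u)^2" by (simp add: algebra_simps power2_eq_square)
  also have "\<dots> = 0" using c4u by (simp add: t_def)
  finally have "c1 v - t * c1 u = 0 \<and> c2 v - t * c2 u = 0 \<and> c3 v - t * c3 u = 0" by (rule sq3_zero)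
  moreover have "c4 v = t * c4 u" using c4u by (simp add: t_def)
  ultimately show ?thesis by (auto simp: v4_eq_iff)
qed


lemma smul_add_left: "smul (s + t) x = smul s x + smul t x" by (simp add: v4_eq_iff algebra_simps)
lemma smul_add_right: "smul s (x + y) = smul s x + smul s y" by (simp add: v4_eq_iff algebra_simps)
lemma smul_diff_right: "smul s (x - y) = smul s x - smul s y" by (simp add: v4_eq_iff algebra_simps)
lemma smul_diff_left: "smul (s - t) x = smul s x - smul t x" by (simp add: v4_eq_iff algebra_simps)
lemma smul_smul: "smul s (smul t x) = smul (s * t) x" by (simp add: v4_eq_iff algebra_simps)
lemma smul_neg: "smul (- s) x = - smul s x" by (simp add: v4_eq_iff algebra_simps)

lemma smul_cancel:
  fixes v :: "'a::field v4"
  assumes "v \<noteq> 0" "smul s v = smul s' v" shows "s = s'"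
proof -
  from assms(2) have "smul (s - s') v = 0" by (simp add: smul_diff_left)
  then have "(s - s') * c1 v = 0 \<and> (s - s') * c2 v = 0 \<and> (s - s') * c3 v = 0 \<and> (s - s') * c4 v = 0"
    by (simp add: v4_eq_iff)
  with assms(1) show ?thesis by (auto simp: v4_eq_iff)
qed

lemma Nl_sym: "Nl x y \<longleftrightarrow> Nl y x"
  unfolding Nl_def by (simp add: Qf_def ip_def algebra_simps)

lemma Qf_minus_comm: "Qf (x - y) = Qf (y - x)"
  by (simp add: Qf_def ip_def algebra_simps)

lemma G3:
  fixes a b z :: "'a::linordered_field v4"
  assumes "Nl a b" "a \<noteq> b"
  shows "((Nl z a \<and> Nl z b) \<or> (\<forall>y. Nl y a \<and> Nl y b \<longrightarrow> \<not> Nl z y)) \<longleftrightarrow> ip (z - a) (b - a) = 0"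
proof -
  define u where "u = b - a"
  define w where "w = z - a"
  have Qu: "Qf u = 0" using assms(1) by (simp add: Nl_def u_def Qf_minus_comm)
  have unz: "u \<noteq> 0" using assms(2) by (simp add: u_def)
  have za: "Nl z a \<longleftrightarrow> Qf w = 0" by (simp add: Nl_def w_def)
  have zb: "Nl z b \<longleftrightarrow> Qf (w - u) = 0" by (simp add: Nl_def w_def u_def)
  show ?thesis
  proof
    assume H: "(Nl z a \<and> Nl z b) \<or> (\<forall>y. Nl y a \<and> Nl y b \<longrightarrow> \<not> Nl z y)"
    show "ip (z - a) (b - a) = 0"
    proof (cases "Nl z a \<and> Nl z b")
      case True
      then have "Qf w = 0" "Qf (w - u) = 0" using za zb by auto
      then have "2 * ip w u = 0" using Qu by (simp add: Qf_diff)
      then show ?thesis by (simp add: w_def u_def)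
    next
      case False
      with H have H2: "\<forall>y. Nl y a \<and> Nl y b \<longrightarrow> \<not> Nl z y" by blast
      show ?thesis
      proof (rule ccontr)
        assume c: "ip (z - a) (b - a) \<noteq> 0"
        define t where "t = Qf w / (2 * ip w u)"
        define y where "y = a + smul t u"
        have 1: "Nl y a" using Qu by (simp add: Nl_def y_def Qf_smul)
        have "y - b = smul (t - 1) u" by (simp add: y_def u_def v4_eq_iff algebra_simps)
        then have 2: "Nl y b" using Qu by (simp add: Nl_def Qf_smul)
        have e: "z - y = w - smul t u" by (simp add: y_def w_def v4_eq_iff algebra_simps)
        have "ip w u \<noteq> 0" using c by (simp add: w_def u_def)
        then have 3: "Nl z y" using Qu e
          by (simp add: Nl_def Qf_diff Qf_smul ip_smul_right t_def)
        from 1 2 3 show False using H2 by blast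
      qed
    qed
  next
    assume H: "ip (z - a) (b - a) = 0"
    then have iw: "ip w u = 0" by (simp add: w_def u_def)
    show "(Nl z a \<and> Nl z b) \<or> (\<forall>y. Nl y a \<and> Nl y b \<longrightarrow> \<not> Nl z y)"
    proof (cases "Qf w = 0")
      case True
      then have "Qf (w - u) = 0" using iw Qu by (simp add: Qf_diff)
      then show ?thesis using True za zb by blast
    next
      case False
      have "\<not> Nl z y" if "Nl y a" "Nl y b" for y
      proof -
        define v where "v = y - a"
        have Qv: "Qf v = 0" using that(1) by (simp add: Nl_def v_def)
        have "y - b = v - u" by (simp add: v_def u_def)
        then have "Qf (v - u) = 0" using that(2) by (simp add: Nl_def)
        then have "ip u v = 0" using Qv Qu by (simp add: Qf_diff ip_sym)
        then obtain t where "v = smul t u" using G1[OF Qu Qv _ unz] by blast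
        then have "ip w v = 0" using iw by (simp add: ip_smul_right)
        moreover have "z - y = w - v" by (simp add: w_def v_def)
        ultimately show ?thesis using False Qv by (simp add: Nl_def Qf_diff)
      qed
      then show ?thesis by blast
    qed
  qed
qed


definition n1 :: "'a::linordered_field v4" where "n1 = V 1 0 0 1"
definition n2 :: "'a::linordered_field v4" where "n2 = V (-1) 0 0 1"
definition n3 :: "'a::linordered_field v4" where "n3 = V 0 1 0 1"
definition n4 :: "'a::linordered_field v4" where "n4 = V 0 0 1 1"

lemma nb_null: "Qf n1 = 0" "Qf n2 = 0" "Qf n3 = 0" "Qf n4 = 0"
  "n1 \<noteq> 0" "n2 \<noteq> 0" "n3 \<noteq> 0" "n4 \<noteq> 0"
  by (simp_all add: n1_def n2_def n3_def n4_def Qf_def ip_def v4_eq_iff)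

lemma Qf_neg[simp]: "Qf (- x) = Qf x" by (simp add: Qf_def ip_def)

lemma Nl_0: "Nl x 0 \<longleftrightarrow> Qf x = 0" by (simp add: Nl_def)

lemma EXP4: "Qf (smul a A + smul b B + smul c C + smul d D) =
  a^2 * Qf A + b^2 * Qf B + c^2 * Qf C + d^2 * Qf D + 2 * a * b * ip A B + 2 * a * c * ip A C
  + 2 * a * d * ip A D + 2 * b * c * ip B C + 2 * b * d * ip B D + 2 * c * d * ip C D"
  unfolding Qf_def ip_def by (simp add: power2_eq_square algebra_simps)

locale lp =
  fixes f :: "'a::linordered_field v4 \<Rightarrow> 'a v4"
  assumes inj: "f x = f y \<Longrightarrow> x = y"
    and surj: "\<exists>x. f x = y"
    and NP: "Nl (f x) (f y) \<longleftrightarrow> Nl x y"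
    and SP: "c4 x = c4 y \<Longrightarrow> c4 (f x) = c4 (f y) \<Longrightarrow> Qf (f x - f y) = Qf (x - y)"
begin

lemma NH_transfer:
  "((Nl z a \<and> Nl z b) \<or> (\<forall>y. Nl y a \<and> Nl y b \<longrightarrow> \<not> Nl z y)) \<longleftrightarrow>
   ((Nl (f z) (f a) \<and> Nl (f z) (f b)) \<or> (\<forall>y. Nl y (f a) \<and> Nl y (f b) \<longrightarrow> \<not> Nl (f z) y))"
proof -
  have "(\<forall>y. Nl y (f a) \<and> Nl y (f b) \<longrightarrow> \<not> Nl (f z) y) \<longleftrightarrow>
        (\<forall>y. Nl (f y) (f a) \<and> Nl (f y) (f b) \<longrightarrow> \<not> Nl (f z) (f y))"
    by (metis surj)
  then show ?thesis by (simp add: NP)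
qed

lemma HP:
  assumes "Nl a b" "a \<noteq> b"
  shows "ip (z - a) (b - a) = 0 \<longleftrightarrow> ip (f z - f a) (f b - f a) = 0"
proof -
  have "Nl (f a) (f b)" using assms(1) NP by simp
  moreover have "f a \<noteq> f b" using assms(2) inj by blast
  ultimately show ?thesis
    using G3[OF assms, of z] G3[of "f a" "f b" "f z"] NH_transfer by simp
qed

definition Phi where "Phi x = f x - f 0"

lemma null_Phi: "Qf m = 0 \<Longrightarrow> Qf (Phi m) = 0"
  using NP[of m 0] by (simp add: Phi_def Nl_def)

lemma Phi_nz: "m \<noteq> 0 \<Longrightarrow> Phi m \<noteq> 0"
  using inj[of m 0] by (auto simp: Phi_def)

lemma Phi0[simp]: "Phi 0 = 0" by (simp add: Phi_def)

lemma HP_0: "Qf m = 0 \<Longrightarrow> m \<noteq> 0 \<Longrightarrow> ip z m = 0 \<longleftrightarrow> ip (Phi z) (Phi m) = 0"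
  using HP[of 0 m z] by (simp add: Nl_def Phi_def)

lemma HP_y: "Qf m = 0 \<Longrightarrow> m \<noteq> 0 \<Longrightarrow> ip (z - y) m = 0 \<longleftrightarrow> ip (f z - f y) (f (y + m) - f y) = 0"
  using HP[of y "y + m" z] by (simp add: Nl_def)

lemma Ny_perp:
  assumes Qm: "Qf m = 0" and mnz: "m \<noteq> 0"
  shows "ip (f (y + m) - f y) (Phi m) = 0"
proof (cases "ip y m = 0")
  case True
  then have "ip (Phi y) (Phi m) = 0" using HP_0[OF Qm mnz] by simp
  moreover have "ip (y + m) m = 0" using True Qm by (simp add: ip_add_left Qf_def)
  then have "ip (Phi (y + m)) (Phi m) = 0" using HP_0[OF Qm mnz] by simp
  moreover have "f (y + m) - f y = Phi (y + m) - Phi y" by (simp add: Phi_def)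
  ultimately show ?thesis by (simp add: ip_diff_left)
next
  case False
  show ?thesis
  proof (rule ccontr)
    define Ny where "Ny = f (y + m) - f y"
    assume "ip (f (y + m) - f y) (Phi m) \<noteq> 0"
    then have c: "ip Ny (Phi m) \<noteq> 0" by (simp add: Ny_def)
    define \<beta> where "\<beta> = ip (f y - f 0) Ny / ip Ny (Phi m)"
    obtain z where z: "f z = f 0 + smul \<beta> (Phi m)" using surj by metis
    have "ip (Phi z) (Phi m) = 0" using null_Phi[OF Qm] z
      by (simp add: Phi_def ip_smul_left Qf_def)
    then have h1: "ip z m = 0" using HP_0[OF Qm mnz] by simp
    have e1: "f z - f y = smul \<beta> (Phi m) - (f y - f 0)" using z by simp
    have e2: "ip (smul \<beta> (Phi m) - (f y - f 0)) Ny = \<beta> * ip Ny (Phi m) - ip (f y - f 0) Ny"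
      by (simp add: ip_diff_left ip_smul_left ip_sym[of "Phi m"])
    have "ip (f z - f y) Ny = \<beta> * ip Ny (Phi m) - ip (f y - f 0) Ny" unfolding e1 by (rule e2)
    then have "ip (f z - f y) Ny = 0" using c by (simp add: \<beta>_def)
    then have h2: "ip (z - y) m = 0" using HP_y[OF Qm mnz] by (simp add: Ny_def)
    have "ip y m = ip z m - ip (z - y) m" by (simp add: ip_diff_left)
    with h1 h2 False show False by simp
  qed
qed

lemma PAR:
  assumes Qm: "Qf m = 0" and mnz: "m \<noteq> 0"
  shows "\<exists>k. f (y + m) - f y = smul k (Phi m) \<and> k \<noteq> 0"
proof -
  have "Qf (f (y + m) - f y) = 0" using NP[of "y + m" y] Qm by (simp add: Nl_def)
  then obtain k where k: "f (y + m) - f y = smul k (Phi m)"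
    using G1[OF null_Phi[OF Qm] _ _ Phi_nz[OF mnz]] Ny_perp[OF Qm mnz] ip_sym by metis
  have "f (y + m) \<noteq> f y" using inj[of "y + m" y] mnz by auto
  then have "k \<noteq> 0" using k by auto
  with k show ?thesis by blast
qed

lemma HP0:
  assumes Qm: "Qf m = 0" and mnz: "m \<noteq> 0"
  shows "ip (x - y) m = 0 \<longleftrightarrow> ip (f x - f y) (Phi m) = 0"
proof -
  obtain k where k: "f (y + m) - f y = smul k (Phi m)" "k \<noteq> 0" using PAR[OF Qm mnz] by blast
  show ?thesis using HP_y[OF Qm mnz, of x y] k by (simp add: ip_smul_right)
qed

lemma REL:
  assumes Qu: "Qf u = 0" and unz: "u \<noteq> 0" and Qm: "Qf m = 0" and mnz: "m \<noteq> 0"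
    and h: "ip (b - a) m = 0" and um: "ip u m \<noteq> 0"
  shows "f (b + u) - f b = f (a + u) - f a"
proof -
  obtain ka where ka: "f (a + u) - f a = smul ka (Phi u)" using PAR[OF Qu unz] by blast
  obtain kb where kb: "f (b + u) - f b = smul kb (Phi u)" using PAR[OF Qu unz] by blast
  have "(b + u) - (a + u) = b - a" by simp
  then have e1: "ip (f (b + u) - f (a + u)) (Phi m) = 0" using HP0[OF Qm mnz, of "b + u" "a + u"] h by simp
  have e2: "ip (f b - f a) (Phi m) = 0" using HP0[OF Qm mnz, of b a] h by simp
  have "(f (b + u) - f b) - (f (a + u) - f a) = (f (b + u) - f (a + u)) - (f b - f a)" by simp
  then have "ip ((f (b + u) - f b) - (f (a + u) - f a)) (Phi m) = 0" using e1 e2 by (simp add: ip_diff_left)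
  then have "(kb - ka) * ip (Phi u) (Phi m) = 0" using ka kb by (simp add: ip_diff_left ip_smul_left algebra_simps)
  moreover have "ip (Phi u) (Phi m) \<noteq> 0" using HP0[OF Qm mnz, of u 0] um by (simp add: Phi_def)
  ultimately have "ka = kb" by simp
  with ka kb show ?thesis by simp
qed

lemma TR2:
  assumes Qu: "Qf u = 0" and unz: "u \<noteq> 0"
    and Q1: "Qf m1 = 0" "m1 \<noteq> 0" and Q2: "Qf m2 = 0" "m2 \<noteq> 0"
    and m12: "ip m1 m2 \<noteq> 0" and u1: "ip u m1 \<noteq> 0" and u2: "ip u m2 \<noteq> 0"
  shows "f (a + u) = f a + Phi u"
proof -
  define b where "b = smul (ip a m2 / ip m1 m2) m1"
  have "ip (b - 0) m1 = 0" using Q1 by (simp add: b_def ip_smul_left Qf_def)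
  then have "f (b + u) - f b = f (0 + u) - f 0" using REL[OF Qu unz Q1 _ u1] by blast
  moreover have "ip (a - b) m2 = 0" using m12 by (simp add: b_def ip_diff_left ip_smul_left)
  then have "f (a + u) - f a = f (b + u) - f b" using REL[OF Qu unz Q2 _ u2] by blast
  ultimately have "f (a + u) - f a = Phi u" by (simp add: Phi_def)
  then show ?thesis by (metis add.commute diff_add_cancel)
qed

lemma TR:
  assumes Qu: "Qf u = 0"
  shows "f (a + u) = f a + Phi u"
proof (cases "u = 0")
  case True then show ?thesis by simp
next
  case False
  have ip1: "ip u n1 = c1 u - c4 u" and ip2: "ip u n2 = - c1 u - c4 u" and ip3: "ip u n3 = c2 u - c4 u"
    by (simp_all add: ip_def n1_def n2_def n3_def)
  have Qu': "(c1 u)^2 + (c2 u)^2 + (c3 u)^2 = (c4 u)^2" using Qu by (simp add: Qf_def ip_def power2_eq_square)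
  have nb: "ip n1 n2 \<noteq> 0" "ip n1 n3 \<noteq> 0" "ip n2 n3 \<noteq> 0" by (simp_all add: ip_def n1_def n2_def n3_def)
  have z: "u = 0" if "c4 u = 0" "c3 u = 0" "c1 u = 0" "c2 u = 0" using that by (simp add: v4_eq_iff)
  have A: "ip u n1 \<noteq> 0 \<or> ip u n2 \<noteq> 0"
  proof (rule ccontr)
    assume "\<not> ?thesis"
    then have "c1 u = 0" "c4 u = 0" using ip1 ip2 by auto
    then have "(c2 u)^2 + (c3 u)^2 = 0" using Qu' by simp
    then show False using z \<open>c1 u = 0\<close> \<open>c4 u = 0\<close> False by (simp add: sum_power2_eq_zero_iff)
  qed
  have B: "ip u n1 \<noteq> 0 \<or> ip u n3 \<noteq> 0"
  proof (rule ccontr)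
    assume "\<not> ?thesis"
    then have "c1 u = c4 u" "c2 u = c4 u" using ip1 ip3 by auto
    then have "(c4 u)^2 + (c3 u)^2 = 0" using Qu' by simp
    then show False using z \<open>c1 u = c4 u\<close> \<open>c2 u = c4 u\<close> False by (simp add: sum_power2_eq_zero_iff)
  qed
  have C: "ip u n2 \<noteq> 0 \<or> ip u n3 \<noteq> 0"
  proof (rule ccontr)
    assume "\<not> ?thesis"
    then have "c1 u = - c4 u" "c2 u = c4 u" using ip2 ip3 by auto
    then have "(c4 u)^2 + (c3 u)^2 = 0" using Qu' by simp
    then show False using z \<open>c1 u = - c4 u\<close> \<open>c2 u = c4 u\<close> False by (simp add: sum_power2_eq_zero_iff)
  qed
  show ?thesis
  proof (cases "ip u n1 = 0")
    case True
    with A B have "ip u n2 \<noteq> 0" "ip u n3 \<noteq> 0" by auto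
    then show ?thesis using TR2[OF Qu False nb_null(2) nb_null(6) nb_null(3) nb_null(7) nb(3)] by blast
  next
    case F1: False
    show ?thesis
    proof (cases "ip u n2 = 0")
      case True
      with C have "ip u n3 \<noteq> 0" by auto
      then show ?thesis using TR2[OF Qu False nb_null(1) nb_null(5) nb_null(3) nb_null(7) nb(2)] F1 by blast
    next
      case False
      then show ?thesis using TR2[OF Qu \<open>u \<noteq> 0\<close> nb_null(1) nb_null(5) nb_null(2) nb_null(6) nb(1)] F1 by blast
    qed
  qed
qed


definition dd1 :: "'a v4 \<Rightarrow> 'a" where "dd1 x = (c1 x + c4 x - c2 x - c3 x) / 2"
definition dd2 :: "'a v4 \<Rightarrow> 'a" where "dd2 x = (c4 x - c2 x - c3 x - c1 x) / 2"

lemma decomp: "x = smul (dd1 x) n1 + smul (dd2 x) n2 + smul (c2 x) n3 + smul (c3 x) n4"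
  by (simp add: v4_eq_iff dd1_def dd2_def n1_def n2_def n3_def n4_def field_simps)

lemma Qf_smul_n: "Qf (smul t n1) = 0" "Qf (smul t n2) = 0" "Qf (smul t n3) = 0" "Qf (smul t n4) = 0"
  by (simp_all add: Qf_smul nb_null)

lemma f_sum4:
  assumes "Qf s1 = 0" "Qf s2 = 0" "Qf s3 = 0" "Qf s4 = 0"
  shows "f (a + (s1 + s2 + s3 + s4)) = f a + (Phi s1 + Phi s2 + Phi s3 + Phi s4)"
proof -
  have "f (a + (s1 + s2 + s3 + s4)) = f (((a + s1) + s2) + s3) + Phi s4"
    using TR[OF assms(4), of "a + s1 + s2 + s3"] by (simp add: add.assoc)
  also have "\<dots> = f (a + s1) + Phi s2 + Phi s3 + Phi s4"
    using TR[OF assms(2), of "a + s1"] TR[OF assms(3), of "a + s1 + s2"] by simp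
  also have "\<dots> = f a + (Phi s1 + Phi s2 + Phi s3 + Phi s4)" using TR[OF assms(1), of a] by (simp add: add.assoc)
  finally show ?thesis .
qed

lemma ADD: "Phi (a + x) = Phi a + Phi x"
proof -
  let ?s1 = "smul (dd1 x) n1" and ?s2 = "smul (dd2 x) n2" and ?s3 = "smul (c2 x) n3" and ?s4 = "smul (c3 x) n4"
  have x: "x = ?s1 + ?s2 + ?s3 + ?s4" by (rule decomp)
  define S where "S = Phi ?s1 + Phi ?s2 + Phi ?s3 + Phi ?s4"
  have e1: "f (a + x) = f a + S"
    using f_sum4[OF Qf_smul_n, of a] x unfolding S_def by metis
  have e2: "f (0 + x) = f 0 + S"
    using f_sum4[OF Qf_smul_n, of 0] x unfolding S_def by metis
  have "Phi (a + x) = (f a + S) - f 0" using e1 by (simp only: Phi_def)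
  also have "\<dots> = (f a - f 0) + S" by (simp add: algebra_simps)
  also have "\<dots> = Phi a + Phi x" using e2 by (simp add: Phi_def)
  finally show ?thesis .
qed

lemma Phi_neg: "Phi (- x) = - Phi x"
  using ADD[of x "- x"] by (simp add: algebra_simps eq_neg_iff_add_eq_0)

lemma Phi_diff: "Phi (x - y) = Phi x - Phi y"
  using ADD[of x "- y"] Phi_neg[of y] by simp

lemma f_diff: "f x - f y = Phi (x - y)"
  unfolding Phi_diff by (simp add: Phi_def)

definition lam where "lam p t = (SOME s. Phi (smul t p) = smul s (Phi p))"

lemma lam:
  assumes Qp: "Qf p = 0" and pnz: "p \<noteq> 0"
  shows "Phi (smul t p) = smul (lam p t) (Phi p)"
proof -
  have "ip (smul t p - 0) p = 0" using Qp by (simp add: ip_smul_left Qf_def)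
  then have "ip (Phi (smul t p)) (Phi p) = 0" using HP0[OF Qp pnz, of "smul t p" 0] by (simp add: Phi_def)
  moreover have "Qf (Phi (smul t p)) = 0" using null_Phi Qp by (simp add: Qf_smul)
  ultimately have "\<exists>s. Phi (smul t p) = smul s (Phi p)"
    using G1[OF null_Phi[OF Qp] _ _ Phi_nz[OF pnz]] by (simp add: ip_sym)
  then show ?thesis unfolding lam_def by (rule someI_ex)
qed

lemma lam_add:
  assumes Qp: "Qf p = 0" and pnz: "p \<noteq> 0"
  shows "lam p (s + t) = lam p s + lam p t"
proof -
  have "smul (lam p (s + t)) (Phi p) = smul (lam p s + lam p t) (Phi p)"
    using lam[OF Qp pnz, of "s + t"] lam[OF Qp pnz, of s] lam[OF Qp pnz, of t] ADD
    by (simp add: smul_add_left)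
  then show ?thesis using smul_cancel Phi_nz[OF pnz] by blast
qed

lemma lam_one:
  assumes Qp: "Qf p = 0" and pnz: "p \<noteq> 0"
  shows "lam p 1 = 1"
  using lam[OF Qp pnz, of 1] smul_cancel[OF Phi_nz[OF pnz], of 1 "lam p 1"] by simp

lemma lam_zero:
  assumes Qp: "Qf p = 0" and pnz: "p \<noteq> 0"
  shows "lam p 0 = 0"
  using lam_add[OF Qp pnz, of 0 0] by simp

lemma lam_neg:
  assumes Qp: "Qf p = 0" and pnz: "p \<noteq> 0"
  shows "lam p (- t) = - lam p t"
  using lam_add[OF Qp pnz, of t "- t"] lam_zero[OF Qp pnz] by (simp add: eq_neg_iff_add_eq_0)

lemma lam_diff:
  assumes Qp: "Qf p = 0" and pnz: "p \<noteq> 0"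
  shows "lam p (s - t) = lam p s - lam p t"
  using lam_add[OF Qp pnz, of s "- t"] lam_neg[OF Qp pnz, of t] by simp

lemma LINK:
  assumes Qp: "Qf p = 0" and pnz: "p \<noteq> 0" and Qq: "Qf q = 0" and qnz: "q \<noteq> 0"
    and Qm: "Qf m = 0" and mnz: "m \<noteq> 0" and qm: "ip q m \<noteq> 0" and pm: "ip p m = \<mu> * ip q m"
  shows "lam p t * lam q \<mu> = lam q (\<mu> * t)"
proof -
  have E: "lam p t * ip (Phi p) (Phi m) = lam q (\<mu> * t) * ip (Phi q) (Phi m)" for t
  proof -
    define x where "x = smul t p - smul (\<mu> * t) q"
    have "ip (x - 0) m = 0" using pm by (simp add: x_def ip_diff_left ip_smul_left)
    then have "ip (Phi x) (Phi m) = 0" using HP0[OF Qm mnz, of x 0] by (simp add: Phi_def)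
    moreover have "Phi x = smul (lam p t) (Phi p) - smul (lam q (\<mu> * t)) (Phi q)"
      by (simp add: x_def Phi_diff lam[OF Qp pnz] lam[OF Qq qnz])
    ultimately show ?thesis by (simp add: ip_diff_left ip_smul_left)
  qed
  have K: "ip (Phi q) (Phi m) \<noteq> 0" using HP0[OF Qm mnz, of q 0] qm by (simp add: Phi_def)
  have "ip (Phi p) (Phi m) = lam q \<mu> * ip (Phi q) (Phi m)"
    using E[of 1] lam_one[OF Qp pnz] by simp
  then have "lam p t * lam q \<mu> * ip (Phi q) (Phi m) = lam q (\<mu> * t) * ip (Phi q) (Phi m)"
    using E[of t] by (simp add: algebra_simps)
  with K show ?thesis by simp
qed


definition L where "L t = lam n1 t"

lemma L_add: "L (s + t) = L s + L t" unfolding L_def using lam_add nb_null by blast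
lemma L_diff: "L (s - t) = L s - L t" unfolding L_def using lam_diff nb_null by blast
lemma L_one: "L 1 = 1" unfolding L_def using lam_one nb_null by blast
lemma L_zero: "L 0 = 0" unfolding L_def using lam_zero nb_null by blast

lemma lam2: "lam n2 t = L t"
proof -
  have "lam n2 t * lam n1 1 = lam n1 (1 * t)"
    by (rule LINK[OF nb_null(2) nb_null(6) nb_null(1) nb_null(5) nb_null(3) nb_null(7)])
       (simp_all add: ip_def n1_def n2_def n3_def)
  then show ?thesis using L_one by (simp add: L_def)
qed

lemma lam3: "lam n3 t = L t"
proof -
  have "lam n3 t * lam n1 1 = lam n1 (1 * t)"
    by (rule LINK[OF nb_null(3) nb_null(7) nb_null(1) nb_null(5), where m = "V 2 2 1 3"])
       (simp_all add: ip_def Qf_def n1_def n3_def v4_eq_iff)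
  then show ?thesis using L_one by (simp add: L_def)
qed

lemma lam4: "lam n4 t = L t"
proof -
  have "lam n4 t * lam n1 1 = lam n1 (1 * t)"
    by (rule LINK[OF nb_null(4) nb_null(8) nb_null(1) nb_null(5), where m = "V 2 1 2 3"])
       (simp_all add: ip_def Qf_def n1_def n4_def v4_eq_iff)
  then show ?thesis using L_one by (simp add: L_def)
qed

lemma L_sq_mult: "L (s^2 * t) = L (s^2) * L t"
proof -
  define m :: "'a v4" where "m = V ((1 - s^2)/2) s 0 ((1 + s^2)/2)"
  have Qm: "Qf m = 0" by (simp add: m_def Qf_def ip_def field_simps power2_eq_square)
  have "c4 m > 0" by (simp add: m_def add_pos_nonneg)
  then have mnz: "m \<noteq> 0" by auto
  have "lam n1 t * lam n2 (s^2) = lam n2 (s^2 * t)"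
    by (rule LINK[OF nb_null(1) nb_null(5) nb_null(2) nb_null(6) Qm mnz])
       (simp_all add: ip_def m_def n1_def n2_def field_simps)
  then show ?thesis by (simp add: lam2 L_def mult.commute)
qed

lemma L_mult: "L (r * t) = L r * L t"
proof -
  define A where "A = (r + 1) / 2"
  define B where "B = (r - 1) / 2"
  have r: "r = A^2 - B^2" by (simp add: A_def B_def field_simps power2_eq_square)
  have "L (r * t) = L (A^2 * t - B^2 * t)" by (simp add: r algebra_simps)
  also have "\<dots> = (L (A^2) - L (B^2)) * L t" using L_sq_mult[of A t] L_sq_mult[of B t] by (simp add: L_diff algebra_simps)
  also have "\<dots> = L r * L t" by (simp add: r L_diff)
  finally show ?thesis .
qed

lemma Phi_decomp:
  "Phi x = smul (L (dd1 x)) (Phi n1) + smul (L (dd2 x)) (Phi n2) + smul (L (c2 x)) (Phi n3) + smul (L (c3 x)) (Phi n4)"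
proof -
  have "Phi x = Phi (smul (dd1 x) n1 + smul (dd2 x) n2 + smul (c2 x) n3 + smul (c3 x) n4)"
    using decomp by metis
  also have "\<dots> = smul (L (dd1 x)) (Phi n1) + smul (L (dd2 x)) (Phi n2) + smul (L (c2 x)) (Phi n3) + smul (L (c3 x)) (Phi n4)"
    by (simp add: ADD lam[OF nb_null(1) nb_null(5)] lam[OF nb_null(2) nb_null(6)]
       lam[OF nb_null(3) nb_null(7)] lam[OF nb_null(4) nb_null(8)] lam2 lam3 lam4 L_def[symmetric])
  finally show ?thesis .
qed

lemma SEMI: "Phi (smul s x) = smul (L s) (Phi x)"
proof -
  have "dd1 (smul s x) = s * dd1 x" "dd2 (smul s x) = s * dd2 x" by (simp_all add: dd1_def dd2_def algebra_simps)
  then show ?thesis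
    by (simp add: Phi_decomp[of "smul s x"] Phi_decomp[of x] L_mult smul_add_right smul_smul)
qed

lemma L_surj: "\<exists>t. L t = r"
proof -
  obtain z where z: "f z = f 0 + smul r (Phi n1)" using surj by metis
  have QP: "Qf (Phi n1) = 0" using null_Phi nb_null by blast
  have "Nl (f z) (f 0)" using z QP by (simp add: Nl_def Qf_smul)
  then have Qz: "Qf z = 0" using NP by (simp add: Nl_def)
  have "f z - f n1 = smul (r - 1) (Phi n1)" using z by (simp add: Phi_def smul_diff_left algebra_simps)
  then have "Nl (f z) (f n1)" using QP by (simp add: Nl_def Qf_smul)
  then have "Qf (z - n1) = 0" using NP by (simp add: Nl_def)
  moreover have "Qf (z - n1) = Qf z - 2 * ip z n1 + Qf n1" by (rule Qf_diff)
  moreover have "Qf (n1::'a v4) = 0" by (rule nb_null(1))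
  ultimately have "ip z n1 = 0" using Qz by simp
  then have "ip n1 z = 0" by (simp add: ip_sym)
  then obtain t where t: "z = smul t n1" using G1[OF nb_null(1) Qz _ nb_null(5)] by blast
  have "smul (L t) (Phi n1) = smul r (Phi n1)"
    using z t lam[OF nb_null(1) nb_null(5), of t] by (simp add: Phi_def L_def)
  then show ?thesis using smul_cancel[OF Phi_nz[OF nb_null(5)]] by blast
qed


lemma Dvec: "\<exists>w. c4 w = 0 \<and> c4 (Phi w) = 0 \<and> Qf w > 0"
proof (cases "c4 (Phi (V 0 1 0 0)) = 0")
  case True
  then show ?thesis by (intro exI[of _ "V 0 1 0 0"]) (simp add: Qf_def ip_def)
next
  case False
  obtain b where b: "L b = - c4 (Phi (V 1 0 0 0)) / c4 (Phi (V 0 1 0 0))" using L_surj by blast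
  define w :: "'a v4" where "w = V 1 0 0 0 + smul b (V 0 1 0 0)"
  have "Phi w = Phi (V 1 0 0 0) + smul (L b) (Phi (V 0 1 0 0))" by (simp add: w_def ADD SEMI)
  then have "c4 (Phi w) = 0" using False b by simp
  moreover have "Qf w = 1 + b^2" by (simp add: w_def Qf_def ip_def power2_eq_square)
  then have "Qf w > 0" by (simp add: add_pos_nonneg)
  moreover have "c4 w = 0" by (simp add: w_def)
  ultimately show ?thesis by blast
qed

lemma Dvec_SP: "c4 w = 0 \<Longrightarrow> c4 (Phi w) = 0 \<Longrightarrow> Qf (Phi w) = Qf w"
  using SP[of w 0] by (simp add: Phi_def)

lemma Lsq: "(L s)^2 = s^2"
proof -
  obtain w where w: "c4 w = 0" "c4 (Phi w) = 0" "Qf w > 0" using Dvec by blast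
  have "c4 (smul s w) = 0" "c4 (Phi (smul s w)) = 0" using w by (simp_all add: SEMI)
  then have "Qf (Phi (smul s w)) = Qf (smul s w)" by (rule Dvec_SP)
  then have "(L s)^2 * Qf (Phi w) = s^2 * Qf w" by (simp add: SEMI Qf_smul)
  moreover have "Qf (Phi w) = Qf w" using w Dvec_SP by blast
  ultimately show ?thesis using w(3) by simp
qed

lemma L_id: "L s = s"
proof -
  have a: "L s = s \<or> L s = - s" using Lsq[of s] by (simp add: power2_eq_iff)
  have b: "L (s + 1) = s + 1 \<or> L (s + 1) = - (s + 1)" using Lsq[of "s + 1"] by (simp add: power2_eq_iff)
  have "L (s + 1) = L s + 1" by (simp add: L_add L_one)
  with a b show ?thesis by (auto simp: algebra_simps)
qed

lemma LIN: "Phi (smul s x) = smul s (Phi x)"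
  by (simp add: SEMI L_id)


lemma Phi_lin_decomp:
  "Phi x = smul (c1 x) (Phi (V 1 0 0 0)) + smul (c2 x) (Phi (V 0 1 0 0)) + smul (c3 x) (Phi (V 0 0 1 0)) + smul (c4 x) (Phi (V 0 0 0 1))"
proof -
  have "x = smul (c1 x) (V 1 0 0 0) + smul (c2 x) (V 0 1 0 0) + smul (c3 x) (V 0 0 1 0) + smul (c4 x) (V 0 0 0 1)"
    by (simp add: v4_eq_iff)
  then have "Phi x = Phi (smul (c1 x) (V 1 0 0 0) + smul (c2 x) (V 0 1 0 0) + smul (c3 x) (V 0 0 1 0) + smul (c4 x) (V 0 0 0 1))"
    by metis
  then show ?thesis by (simp add: ADD LIN)
qed

lemma CONF: "Qf (Phi x) = Qf x"
proof -
  define E1 where "E1 = Phi (V 1 0 0 0)"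
  define E2 where "E2 = Phi (V 0 1 0 0)"
  define E3 where "E3 = Phi (V 0 0 1 0)"
  define E4 where "E4 = Phi (V 0 0 0 1)"
  have PD: "Phi x = smul (c1 x) E1 + smul (c2 x) E2 + smul (c3 x) E3 + smul (c4 x) E4" for x
    unfolding E1_def E2_def E3_def E4_def by (rule Phi_lin_decomp)
  have NV: "Qf v = 0 \<Longrightarrow> Qf (smul (c1 v) E1 + smul (c2 v) E2 + smul (c3 v) E3 + smul (c4 v) E4) = 0" for v
    using null_Phi[of v] PD[of v] by simp
  note X = NV[unfolded EXP4]
  have h1: "Qf E1 + Qf E4 + 2 * ip E1 E4 = 0" using X[of "V 1 0 0 1"] by (simp add: Qf_def[of "V _ _ _ _"] ip_def)
  have h2: "Qf E1 + Qf E4 - 2 * ip E1 E4 = 0" using X[of "V 1 0 0 (-1)"] by (simp add: Qf_def[of "V _ _ _ _"] ip_def)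
  have h3: "Qf E2 + Qf E4 + 2 * ip E2 E4 = 0" using X[of "V 0 1 0 1"] by (simp add: Qf_def[of "V _ _ _ _"] ip_def)
  have h4: "Qf E2 + Qf E4 - 2 * ip E2 E4 = 0" using X[of "V 0 1 0 (-1)"] by (simp add: Qf_def[of "V _ _ _ _"] ip_def)
  have h5: "Qf E3 + Qf E4 + 2 * ip E3 E4 = 0" using X[of "V 0 0 1 1"] by (simp add: Qf_def[of "V _ _ _ _"] ip_def)
  have h6: "Qf E3 + Qf E4 - 2 * ip E3 E4 = 0" using X[of "V 0 0 1 (-1)"] by (simp add: Qf_def[of "V _ _ _ _"] ip_def)
  have h7: "9/25 * Qf E1 + 16/25 * Qf E2 + Qf E4 + 24/25 * ip E1 E2 + 6/5 * ip E1 E4 + 8/5 * ip E2 E4 = 0"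
    using X[of "V (3/5) (4/5) 0 1"] by (simp add: Qf_def[of "V _ _ _ _"] ip_def power2_eq_square)
  have h8: "9/25 * Qf E1 + 16/25 * Qf E3 + Qf E4 + 24/25 * ip E1 E3 + 6/5 * ip E1 E4 + 8/5 * ip E3 E4 = 0"
    using X[of "V (3/5) 0 (4/5) 1"] by (simp add: Qf_def[of "V _ _ _ _"] ip_def power2_eq_square)
  have h9: "9/25 * Qf E2 + 16/25 * Qf E3 + Qf E4 + 24/25 * ip E2 E3 + 6/5 * ip E2 E4 + 8/5 * ip E3 E4 = 0"
    using X[of "V 0 (3/5) (4/5) 1"] by (simp add: Qf_def[of "V _ _ _ _"] ip_def power2_eq_square)
  have p: "ip E1 E4 = 0" "ip E2 E4 = 0" "ip E3 E4 = 0" "Qf E2 = Qf E1" "Qf E3 = Qf E1" "Qf E4 = - Qf E1"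
    "ip E1 E2 = 0" "ip E1 E3 = 0" "ip E2 E3 = 0"
    using h1 h2 h3 h4 h5 h6 h7 h8 h9 by linarith+
  have k: "Qf (Phi x) = Qf E1 * Qf x" for x
    unfolding PD EXP4 p by (simp add: Qf_def[of x] ip_def[of x] power2_eq_square algebra_simps)
  obtain w where w: "c4 w = 0" "c4 (Phi w) = 0" "Qf w > 0" using Dvec by blast
  have "Qf E1 * Qf w = Qf w" using k[of w] Dvec_SP[OF w(1,2)] by simp
  then have "Qf E1 = 1" using w(3) by simp
  then show ?thesis using k by simp
qed

theorem main: "Qf (f x - f y) = Qf (x - y)"
  by (simp add: f_diff CONF)

end


lemma Nl_iff: "Nl x y \<longleftrightarrow> (c1 x - c1 y)^2 + (c2 x - c2 y)^2 + (c3 x - c3 y)^2 = (c4 x - c4 y)^2"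
  by (simp add: Nl_def Qf_def ip_def power2_eq_square algebra_simps)

lemma sep_aux:
  fixes x y v :: "'a::linordered_field v4"
  assumes Qv: "Qf v = 0" and H: "\<forall>z. Nl x z \<longrightarrow> Nl y z"
  shows "ip (y - x) v = 0"
proof -
  have "Nl y (x + smul t v)" for t
    using H Qv by (simp add: Nl_def Qf_smul)
  then have "Qf ((y - x) - smul t v) = 0" for t by (simp add: Nl_def algebra_simps)
  moreover have "Qf ((y - x) - smul t v) = Qf (y - x) - 2 * ip (y - x) (smul t v) + Qf (smul t v)" for t
    by (rule Qf_diff)
  ultimately have "Qf (y - x) - 2 * t * ip (y - x) v = 0" for t
    using Qv by (simp add: Qf_smul ip_smul_right mult.assoc)
  from this[of 1] this[of 2] show ?thesis by simp
qed

lemma sep: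
  fixes x y :: "'a::linordered_field v4"
  assumes "x \<noteq> y" shows "\<exists>z. Nl x z \<and> \<not> Nl y z"
proof (rule ccontr)
  assume "\<not> ?thesis"
  then have H: "\<forall>z. Nl x z \<longrightarrow> Nl y z" by blast
  have "ip (y - x) n1 = 0" "ip (y - x) n2 = 0" "ip (y - x) n3 = 0" "ip (y - x) n4 = 0"
    using sep_aux[OF _ H] nb_null by blast+
  then have "y = x" by (simp add: ip_def n1_def n2_def n3_def n4_def v4_eq_iff)
  with assms show False by simp
qed

definition Wv :: "('b \<Rightarrow> 'b \<Rightarrow> 'q \<Rightarrow> 'q \<Rightarrow> 'q \<Rightarrow> 'q \<Rightarrow> bool) \<Rightarrow> 'b \<Rightarrow> 'b \<Rightarrow> 'q v4 \<Rightarrow> bool" where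
  "Wv W ob b x = W ob b (c1 x) (c2 x) (c3 x) (c4 x)"

lemma AxPh_v:
  assumes "AxPh IB Ph W" "IOb IB W ob"
  shows "(\<exists>p. Ph p \<and> Wv W ob p x \<and> Wv W ob p y) \<longleftrightarrow> Nl x y"
  using assms unfolding AxPh_def Wv_def Nl_iff by blast

lemma distinct_ev:
  assumes "AxPh IB Ph W" "IOb IB W ob" "\<forall>b. Wv W ob b x \<longleftrightarrow> Wv W ob b y"
  shows "x = y"
proof (rule ccontr)
  assume "x \<noteq> y"
  then obtain z where z: "Nl x z" "\<not> Nl y z" using sep by blast
  then obtain p where "Ph p" "Wv W ob p x" "Wv W ob p z" using AxPh_v[OF assms(1,2)] by blast
  then have "Ph p \<and> Wv W ob p y \<and> Wv W ob p z" using assms(3) by blast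
  then have "Nl y z" using AxPh_v[OF assms(1,2)] by blast
  with z show False by simp
qed

lemma AxSymd_v:
  assumes "AxSymd IB W" "IOb IB W ob" "IOb IB W ob'" "c4 x = c4 y" "c4 x' = c4 y'"
    "\<forall>b. Wv W ob b x \<longleftrightarrow> Wv W ob' b x'" "\<forall>b. Wv W ob b y \<longleftrightarrow> Wv W ob' b y'"
  shows "(c1 x - c1 y)^2 + (c2 x - c2 y)^2 + (c3 x - c3 y)^2 =
          (c1 x' - c1 y')^2 + (c2 x' - c2 y')^2 + (c3 x' - c3 y')^2"
proof -
  note A = assms(1)[unfolded AxSymd_def, THEN spec[of _ ob], THEN spec[of _ ob'], THEN spec[of _ "c1 x"], THEN spec[of _ "c2 x"], THEN spec[of _ "c3 x"], THEN spec[of _ "c4 x"], THEN spec[of _ "c1 x'"], THEN spec[of _ "c2 x'"], THEN spec[of _ "c3 x'"], THEN spec[of _ "c4 x'"], THEN spec[of _ "c1 y"], THEN spec[of _ "c2 y"], THEN spec[of _ "c3 y"], THEN spec[of _ "c4 y"], THEN spec[of _ "c1 y'"], THEN spec[of _ "c2 y'"], THEN spec[of _ "c3 y'"], THEN spec[of _ "c4 y'"]]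
  show ?thesis using A assms unfolding Wv_def by blast
qed

lemma AxEv_v:
  assumes "AxEv IB W" "IOb IB W ob" "IOb IB W ob'"
  shows "\<exists>x'. \<forall>b. Wv W ob b x \<longleftrightarrow> Wv W ob' b x'"
proof -
  obtain x1' x2' x3' x4' where "\<forall>b. W ob b (c1 x) (c2 x) (c3 x) (c4 x) \<longleftrightarrow> W ob' b x1' x2' x3' x4'"
    using assms(1)[unfolded AxEv_def, rule_format, of ob ob' "c1 x" "c2 x" "c3 x" "c4 x"] assms(2,3) by blast
  then have "\<forall>b. Wv W ob b x \<longleftrightarrow> Wv W ob' b (V x1' x2' x3' x4')" by (simp add: Wv_def)
  then show ?thesis by blast
qed

lemma build_f:
  fixes W :: "'b \<Rightarrow> 'b \<Rightarrow> 'q::linordered_field \<Rightarrow> 'q \<Rightarrow> 'q \<Rightarrow> 'q \<Rightarrow> bool"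
  assumes S: "SpecRel IB Ph W" and o1: "IOb IB W ob" and o2: "IOb IB W ob'"
  shows "\<exists>f. lp f \<and> (\<forall>x. \<forall>b. Wv W ob b x \<longleftrightarrow> Wv W ob' b (f x))"
proof -
  have Ph: "AxPh IB Ph W" and Ev: "AxEv IB W" and Sy: "AxSymd IB W" using S by (simp_all add: SpecRel_def)
  define R where "R x x' \<longleftrightarrow> (\<forall>b. Wv W ob b x \<longleftrightarrow> Wv W ob' b x')" for x x'
  have ex: "\<exists>x'. R x x'" for x
    using AxEv_v[OF Ev o1 o2] unfolding R_def by blast
  define f where "f x = (SOME x'. R x x')" for x
  have Rf: "R x (f x)" for x unfolding f_def using ex by (rule someI_ex)
  have "lp f"
  proof
    fix x y
    assume "f x = f y"
    then have "\<forall>b. Wv W ob b x \<longleftrightarrow> Wv W ob b y" using Rf[of x] Rf[of y] by (simp add: R_def)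
    then show "x = y" using distinct_ev[OF Ph o1] by blast
  next
    fix y
    obtain z where "\<forall>b. Wv W ob' b y \<longleftrightarrow> Wv W ob b z" using AxEv_v[OF Ev o2 o1] by blast
    then have "\<forall>b. Wv W ob' b y \<longleftrightarrow> Wv W ob' b (f z)" using Rf[of z] by (simp add: R_def)
    then have "y = f z" using distinct_ev[OF Ph o2] by blast
    then show "\<exists>x. f x = y" by metis
  next
    fix x y
    have "Nl x y \<longleftrightarrow> (\<exists>p. Ph p \<and> Wv W ob p x \<and> Wv W ob p y)" using AxPh_v[OF Ph o1] by blast
    also have "\<dots> \<longleftrightarrow> (\<exists>p. Ph p \<and> Wv W ob' p (f x) \<and> Wv W ob' p (f y))" using Rf[of x] Rf[of y] by (simp add: R_def)
    also have "\<dots> \<longleftrightarrow> Nl (f x) (f y)" using AxPh_v[OF Ph o2] by blast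
    finally show "Nl (f x) (f y) \<longleftrightarrow> Nl x y" by simp
  next
    fix x y
    assume t: "c4 x = c4 y" "c4 (f x) = c4 (f y)"
    have "(c1 x - c1 y)^2 + (c2 x - c2 y)^2 + (c3 x - c3 y)^2 =
          (c1 (f x) - c1 (f y))^2 + (c2 (f x) - c2 (f y))^2 + (c3 (f x) - c3 (f y))^2"
      using AxSymd_v[OF Sy o1 o2 t] Rf[of x] Rf[of y] unfolding R_def by blast
    then show "Qf (f x - f y) = Qf (x - y)" using t
      by (simp add: Qf_def ip_def power2_eq_square)
  qed
  then show ?thesis using Rf unfolding R_def by blast
qed

theorem theorem2:
  fixes IB Ph :: "'b \<Rightarrow> bool"
    and W :: "'b \<Rightarrow> 'b \<Rightarrow> 'q::linordered_field \<Rightarrow> 'q \<Rightarrow> 'q \<Rightarrow> 'q \<Rightarrow> bool"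
  assumes "SpecRel IB Ph W"
  shows "\<forall>ob ob' x1 x2 x3 x4 x1' x2' x3' x4' y1 y2 y3 y4 y1' y2' y3' y4'.
     IOb IB W ob \<and> IOb IB W ob' \<and>
     (\<forall>b. W ob b x1 x2 x3 x4 \<longleftrightarrow> W ob' b x1' x2' x3' x4') \<and>
     (\<forall>b. W ob b y1 y2 y3 y4 \<longleftrightarrow> W ob' b y1' y2' y3' y4') \<longrightarrow>
     mu x1 x2 x3 x4 y1 y2 y3 y4 = mu x1' x2' x3' x4' y1' y2' y3' y4'"
proof (intro allI impI)
  fix ob ob' x1 x2 x3 x4 x1' x2' x3' x4' y1 y2 y3 y4 y1' y2' y3' y4'
  assume H: "IOb IB W ob \<and> IOb IB W ob' \<and>
     (\<forall>b. W ob b x1 x2 x3 x4 \<longleftrightarrow> W ob' b x1' x2' x3' x4') \<and>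
     (\<forall>b. W ob b y1 y2 y3 y4 \<longleftrightarrow> W ob' b y1' y2' y3' y4')"
  then have o1: "IOb IB W ob" and o2: "IOb IB W ob'"
    and hx: "\<forall>b. W ob b x1 x2 x3 x4 \<longleftrightarrow> W ob' b x1' x2' x3' x4'"
    and hy: "\<forall>b. W ob b y1 y2 y3 y4 \<longleftrightarrow> W ob' b y1' y2' y3' y4'" by auto
  have Ph: "AxPh IB Ph W" using assms by (simp add: SpecRel_def)
  obtain f where f: "lp f" and Rf: "\<forall>x. \<forall>b. Wv W ob b x \<longleftrightarrow> Wv W ob' b (f x)"
    using build_f[OF assms o1 o2] by blast
  define X where "X = V x1 x2 x3 x4"
  define X' where "X' = V x1' x2' x3' x4'"
  define Y where "Y = V y1 y2 y3 y4"
  define Y' where "Y' = V y1' y2' y3' y4'"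
  have "Wv W ob' b X' \<longleftrightarrow> Wv W ob' b (f X)" for b
    using hx Rf[THEN spec[of _ X], THEN spec[of _ b]] by (simp add: Wv_def X_def X'_def)
  then have X': "X' = f X" using distinct_ev[OF Ph o2] by blast
  have "Wv W ob' b Y' \<longleftrightarrow> Wv W ob' b (f Y)" for b
    using hy Rf[THEN spec[of _ Y], THEN spec[of _ b]] by (simp add: Wv_def Y_def Y'_def)
  then have Y': "Y' = f Y" using distinct_ev[OF Ph o2] by blast
  have "mu x1 x2 x3 x4 y1 y2 y3 y4 = Qf (X - Y)"
    by (simp add: mu_def X_def Y_def Qf_def ip_def power2_eq_square)
  moreover have "mu x1' x2' x3' x4' y1' y2' y3' y4' = Qf (X' - Y')"
    by (simp add: mu_def X'_def Y'_def Qf_def ip_def power2_eq_square)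
  ultimately show "mu x1 x2 x3 x4 y1 y2 y3 y4 = mu x1' x2' x3' x4' y1' y2' y3' y4'"
    using lp.main[OF f, of X Y] X' Y' by simp
qed

end
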